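(* Let $V$ be a unital $\mathbb Z$-fold algebra with identity $1$, and let $M$ be a module over $V$. If $a,b\in V$ satisfy skew-symmetry for $T_1$ ($T_1a=a_{(-2)}1$), then the fields $Y_M(a,z)$ and $Y_M(b,z)$ on $M$ are mutually local. In particular, if $V$ is a vertex algebra then any two fields $Y_M(a,z),Y_M(b,z)$, $a,b\in V$, are mutually local.
   Context: $\mathbb K$ of characteristic $0$; super vector spaces, parity $\tilde a$, $\zeta=-1$. A $\mathbb Z$-fold algebra is a vector space $V$ with even products $a_{(n)}b$ ($n\in\mathbb Z$); it is unital with identity $1$ if $1_{(n)}a=\delta_{n,-1}a$ for all $n$, and $a_{(n)}1=0$ ($n\ge0$), $a_{(-1)}1=a$. For a vector space $M$, $\mathcal F_z(M)$ denotes the holomorphic fields on $M$: $a(z)=\sum_{n\in\mathbb Z}a_nz^{-n-1}\in\mathrm{End}(M)[[z^{\pm1}]]$ with $a(z)v\in M((z))$ for all $v$; it is a unital $\mathbb Z$-fold algebra with identity $\mathrm{id}_M$ and products $a(w)_{(n)}b(w):=\mathrm{res}_z\big((z-w)^na(z)b(w)-\zeta^{\tilde a\tilde b}(z-w)^n_{w>z}b(w)a(z)\big)$ ($(z-w)^n$ expanded in nonnegative powers of $w$, $(z-w)^n_{w>z}=(-1)^n(w-z)^n$ in nonnegative powers of $z$, $\mathrm{res}_z$ = coefficient of $z^{-1}$). A module over $V$ is a vector space $M$ with a morphism $Y_M:V\to\mathcal F_z(M)$ of unital $\mathbb Z$-fold algebras. Skew-symmetry for $T$: $a_{(n)}b=0$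 for $n\gg0$ and $\zeta^{\tilde a\tilde b}b_{(n)}a=\sum_{i\ge0}(-1)^{n+1+i}T^{(i)}(a_{(n+i)}b)$ for all $n\in\mathbb Z$ ($T^{(i)}=T^i/i!$). Holomorphic fields $a(z),b(z)$ are mutually local iff $(z-w)^N(a(z)b(w)-\zeta^{\tilde a\tilde b}b(w)a(z))=0$ for some $N\in\mathbb N$. A vertex algebra is a $\mathbb Z$-fold algebra with an even $T$ satisfying $[T,Y(a,z)]=\partial_zY(a,z)$, an identity $1$ with $T1=0$, and mutually local fields $Y(a,z)=\sum a_{(n)}z^{-n-1}$. *)

theory Defs
  imports Complex_Main "HOL-Library.Groups_Big_Fun"
begin

text \<open>A super vector space
  structure is a function P :: bool => set, P False = even part, P True = odd part, with
  the whole space the direct sum of the two subspaces.  Parity addition is exclusive or.\<close>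

definition super_vs :: "('k::field \<Rightarrow> 'v::ab_group_add \<Rightarrow> 'v) \<Rightarrow> (bool \<Rightarrow> 'v set) \<Rightarrow> bool" where
  "super_vs sc P \<longleftrightarrow> vector_space sc
     \<and> (\<forall>p. module.subspace sc (P p))
     \<and> P False \<inter> P True = {0}
     \<and> (\<forall>v. \<exists>x y. x \<in> P False \<and> y \<in> P True \<and> v = x + y)"

definition zeta :: "bool \<Rightarrow> bool \<Rightarrow> 'k::field" where
  "zeta pa pb = (if pa \<and> pb then -1 else 1)"

text \<open>Z-fold algebra: even bilinear products a_(n) b, written prd n a b.\<close>
definition zfold_algebra ::
  "('k::field \<Rightarrow> 'v::ab_group_add \<Rightarrow> 'v) \<Rightarrow> (bool \<Rightarrow> 'v set) \<Rightarrow> (int \<Rightarrow> 'v \<Rightarrow> 'v \<Rightarrow> 'v) \<Rightarrow> bool" where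
  "zfold_algebra sc P prd \<longleftrightarrow> super_vs sc P
     \<and> (\<forall>n a. Vector_Spaces.linear sc sc (prd n a))
     \<and> (\<forall>n b. Vector_Spaces.linear sc sc (\<lambda>a. prd n a b))
     \<and> (\<forall>n p q a b. a \<in> P p \<longrightarrow> b \<in> P q \<longrightarrow> prd n a b \<in> P (p \<noteq> q))"

definition unital_zfold_algebra ::
  "('k::field \<Rightarrow> 'v::ab_group_add \<Rightarrow> 'v) \<Rightarrow> (bool \<Rightarrow> 'v set) \<Rightarrow> (int \<Rightarrow> 'v \<Rightarrow> 'v \<Rightarrow> 'v) \<Rightarrow> 'v \<Rightarrow> bool" where
  "unital_zfold_algebra sc P prd one \<longleftrightarrow> zfold_algebra sc P prd
     \<and> (\<forall>n a. prd n one a = (if n = -1 then a else 0))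
     \<and> (\<forall>n a. n \<ge> 0 \<longrightarrow> prd n a one = 0)
     \<and> (\<forall>a. prd (-1) a one = a)"

text \<open>Formal series a(z) = sum_n a_n z^(-n-1) with coefficients in End(M), represented by
  the coefficient function n |-> a_n.\<close>
type_synonym 'm zfield = "int \<Rightarrow> 'm \<Rightarrow> 'm"

definition hol_field :: "('k::field \<Rightarrow> 'm::ab_group_add \<Rightarrow> 'm) \<Rightarrow> 'm zfield \<Rightarrow> bool" where
  "hol_field scM A \<longleftrightarrow> (\<forall>n. Vector_Spaces.linear scM scM (A n)) \<and> (\<forall>v. \<exists>N. \<forall>n\<ge>N. A n v = 0)"

definition field_parity :: "(bool \<Rightarrow> 'm set) \<Rightarrow> bool \<Rightarrow> 'm zfield \<Rightarrow> bool" where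
  "field_parity PM p A \<longleftrightarrow> (\<forall>n r v. v \<in> PM r \<longrightarrow> A n v \<in> PM (r \<noteq> p))"

text \<open>The n-th product of homogeneous fields A (parity pa) and B (parity pb):
  A(w)_(n) B(w) = res_z ((z-w)^n A(z)B(w) - zeta^(pa pb) (z-w)^n_(w>z) B(w)A(z)),
  written out coefficientwise: its m-th coefficient applied to v is
  sum_(j>=0) (-1)^j (n choose j) A_(n-j) B_(m+j) v
   - zeta^(pa pb) (-1)^n sum_(j>=0) (-1)^j (n choose j) B_(m+n-j) A_j v
  (both sums are finite for holomorphic fields).\<close>
definition fprod :: "('k::field_char_0 \<Rightarrow> 'm::ab_group_add \<Rightarrow> 'm) \<Rightarrow> bool \<Rightarrow> bool \<Rightarrow> int
     \<Rightarrow> 'm zfield \<Rightarrow> 'm zfield \<Rightarrow> 'm zfield" where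
  "fprod scM pa pb n A B = (\<lambda>m v.
      Sum_any (\<lambda>j::nat. scM ((-1) ^ j * (of_int n gchoose j)) (A (n - int j) (B (m + int j) v)))
    - scM (zeta pa pb * ((-1) powi n))
        (Sum_any (\<lambda>j::nat. scM ((-1) ^ j * (of_int n gchoose j)) (B (m + n - int j) (A (int j) v)))))"

text \<open>Identity of F_z(M): the field id_M (coefficient id_M at z^0, i.e. n = -1).\<close>
definition id_field :: "'m::zero zfield" where
  "id_field = (\<lambda>n. if n = -1 then id else (\<lambda>_. 0))"

text \<open>Module over a unital Z-fold algebra: Y_M : V -> F_z(M) is an even linear map
  preserving products and identity.  (Preservation of products is required for
  homogeneous arguments; by bilinearity this is the same as for all arguments.)\<close>
definition zfold_module ::
  "('k::field_char_0 \<Rightarrow> 'v::ab_group_add \<Rightarrow> 'v) \<Rightarrow> (bool \<Rightarrow> 'v set) \<Rightarrow> (int \<Rightarrow> 'v \<Rightarrow> 'v \<Rightarrow> 'v) \<Rightarrow> 'v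
   \<Rightarrow> ('k \<Rightarrow> 'm::ab_group_add \<Rightarrow> 'm) \<Rightarrow> (bool \<Rightarrow> 'm set) \<Rightarrow> ('v \<Rightarrow> 'm zfield) \<Rightarrow> bool" where
  "zfold_module sc P prd one scM PM Y \<longleftrightarrow> super_vs scM PM
     \<and> (\<forall>a. hol_field scM (Y a))
     \<and> (\<forall>c a b n v. Y (sc c a + b) n v = scM c (Y a n v) + Y b n v)
     \<and> (\<forall>p a. a \<in> P p \<longrightarrow> field_parity PM p (Y a))
     \<and> (\<forall>n p q a b. a \<in> P p \<longrightarrow> b \<in> P q \<longrightarrow> Y (prd n a b) = fprod scM p q n (Y a) (Y b))
     \<and> Y one = id_field"

definition T1 :: "(int \<Rightarrow> 'v \<Rightarrow> 'v \<Rightarrow> 'v) \<Rightarrow> 'v \<Rightarrow> 'v \<Rightarrow> 'v" where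
  "T1 prd one = (\<lambda>a. prd (-2) a one)"

definition divided_power :: "('k::field_char_0 \<Rightarrow> 'v \<Rightarrow> 'v) \<Rightarrow> ('v \<Rightarrow> 'v) \<Rightarrow> nat \<Rightarrow> 'v \<Rightarrow> 'v" where
  "divided_power sc T i a = sc (inverse (fact i)) ((T ^^ i) a)"

definition skew_symmetric ::
  "('k::field_char_0 \<Rightarrow> 'v::ab_group_add \<Rightarrow> 'v) \<Rightarrow> (int \<Rightarrow> 'v \<Rightarrow> 'v \<Rightarrow> 'v) \<Rightarrow> ('v \<Rightarrow> 'v)
    \<Rightarrow> bool \<Rightarrow> bool \<Rightarrow> 'v \<Rightarrow> 'v \<Rightarrow> bool" where
  "skew_symmetric sc prd T pa pb a b \<longleftrightarrow>
     (\<exists>N. \<forall>n\<ge>N. prd n a b = 0)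
   \<and> (\<forall>n. sc (zeta pa pb) (prd n b a)
          = Sum_any (\<lambda>i::nat. sc ((-1) powi (n + 1 + int i)) (divided_power sc T i (prd (n + int i) a b))))"

text \<open>Mutual locality of homogeneous fields A (parity pa), B (parity pb):
  (z-w)^N (A(z)B(w) - zeta^(pa pb) B(w)A(z)) = 0, written coefficientwise
  (coefficient of z^(-p-1) w^(-q-1)).\<close>
definition mutually_local :: "('k::field \<Rightarrow> 'm::ab_group_add \<Rightarrow> 'm) \<Rightarrow> bool \<Rightarrow> bool
     \<Rightarrow> 'm zfield \<Rightarrow> 'm zfield \<Rightarrow> bool" where
  "mutually_local scM pa pb A B \<longleftrightarrow> (\<exists>N::nat. \<forall>p q v.
     (\<Sum>j\<le>N. scM ((-1) ^ j * of_nat (N choose j))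
        (A (p + int N - int j) (B (q + int j) v)
         - scM (zeta pa pb) (B (q + int j) (A (p + int N - int j) v)))) = 0)"

text \<open>Vertex algebra (V, T, 1, Y) with Y(a,z) = sum_n a_(n) z^(-n-1).\<close>
definition vertex_algebra ::
  "('k::field_char_0 \<Rightarrow> 'v::ab_group_add \<Rightarrow> 'v) \<Rightarrow> (bool \<Rightarrow> 'v set) \<Rightarrow> (int \<Rightarrow> 'v \<Rightarrow> 'v \<Rightarrow> 'v) \<Rightarrow> 'v
    \<Rightarrow> ('v \<Rightarrow> 'v) \<Rightarrow> bool" where
  "vertex_algebra sc P prd one T \<longleftrightarrow> zfold_algebra sc P prd
     \<and> Vector_Spaces.linear sc sc T
     \<and> (\<forall>p a. a \<in> P p \<longrightarrow> T a \<in> P p)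
     \<and> (\<forall>n a b. T (prd n a b) - prd n a (T b) = sc (- of_int n) (prd (n - 1) a b))
     \<and> (\<forall>n a. prd n one a = (if n = -1 then a else 0))
     \<and> (\<forall>n a. n \<ge> 0 \<longrightarrow> prd n a one = 0)
     \<and> (\<forall>a. prd (-1) a one = a)
     \<and> T one = 0
     \<and> (\<forall>a. hol_field sc (\<lambda>n. prd n a))
     \<and> (\<forall>p q a b. a \<in> P p \<longrightarrow> b \<in> P q \<longrightarrow> mutually_local sc p q (\<lambda>n. prd n a) (\<lambda>n. prd n b))"

end

theory Submission
  imports Defs "HOL-Computational_Algebra.Formal_Power_Series"
begin

lemma SA_nat:
  fixes f :: "nat \<Rightarrow> 'a::comm_monoid_add"
  assumes "\<And>j. j \<ge> K \<Longrightarrow> f j = 0"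
  shows "Sum_any f = (\<Sum>j<K. f j)"
proof (rule Sum_any.expand_superset)
  show "{a. f a \<noteq> 0} \<subseteq> {..<K}" using assms by (auto simp: not_less[symmetric])
qed simp

lemma SA_neg:
  fixes f :: "'b \<Rightarrow> 'a::ab_group_add"
  shows "Sum_any (\<lambda>i. - f i) = - Sum_any f"
  by (simp add: Sum_any.expand_set sum_negf)

lemma SA_diff:
  fixes f g :: "'b \<Rightarrow> 'a::ab_group_add"
  assumes "finite {i. f i \<noteq> 0}" "finite {i. g i \<noteq> 0}"
  shows "Sum_any (\<lambda>i. f i - g i) = Sum_any f - Sum_any g"
proof -
  have "Sum_any (\<lambda>i. f i + (- g i)) = Sum_any f + Sum_any (\<lambda>i. - g i)"
    by (rule Sum_any.distrib) (use assms in auto)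
  then show ?thesis by (simp add: SA_neg)
qed

definition tr :: "(int \<Rightarrow> int \<Rightarrow> 'm) \<Rightarrow> int \<Rightarrow> int \<Rightarrow> 'm" where
  "tr X p q = X q p"

definition M1 :: "(int \<Rightarrow> int \<Rightarrow> 'm::ab_group_add) \<Rightarrow> int \<Rightarrow> int \<Rightarrow> 'm" where
  "M1 X p q = X (p + 1) q - X p (q + 1)"

definition Xs :: "int \<Rightarrow> (int \<Rightarrow> int \<Rightarrow> 'm::zero) \<Rightarrow> bool" where
  "Xs Q X \<longleftrightarrow> (\<forall>p q. Q \<le> q \<longrightarrow> X p q = 0)"

definition Ws :: "int \<Rightarrow> (int \<Rightarrow> int \<Rightarrow> 'm::zero) \<Rightarrow> bool" where
  "Ws P W \<longleftrightarrow> (\<forall>p q. P \<le> p \<longrightarrow> W p q = 0)"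

lemma Xs_tr: "Xs Q X = Ws Q (tr X)" and Ws_tr: "Ws P W = Xs P (tr W)"
  by (auto simp: Xs_def Ws_def tr_def)

lemma Xs_M1: "Xs Q X \<Longrightarrow> Xs Q (M1 X)" by (simp add: Xs_def M1_def)
lemma Ws_M1: "Ws P W \<Longrightarrow> Ws P (M1 W)" by (simp add: Ws_def M1_def)

lemma tr_M1: "tr (M1 X) = (\<lambda>p q. - M1 (tr X) p q)"
  by (auto simp: fun_eq_iff tr_def M1_def)

locale cvs = vector_space scale for scale :: "'k::field_char_0 \<Rightarrow> 'm::ab_group_add \<Rightarrow> 'm" (infixr "*s" 75)
begin

lemma SA_scale: "Sum_any (\<lambda>i. c *s f i) = c *s Sum_any f"
proof (cases "c = 0")
  case False
  then have "{i. c *s f i \<noteq> 0} = {i. f i \<noteq> 0}" by auto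
  then show ?thesis by (simp add: Sum_any.expand_set scale_sum_right)
qed simp

lemma SA_scale_left:
  assumes "finite {i. c i \<noteq> 0}"
  shows "Sum_any (\<lambda>i. c i *s x) = Sum_any c *s x"
proof -
  have "Sum_any (\<lambda>i. c i *s x) = (\<Sum>i\<in>{i. c i \<noteq> 0}. c i *s x)"
    by (rule Sum_any.expand_superset) (use assms in auto)
  then show ?thesis by (simp add: Sum_any.expand_set scale_sum_left)
qed

definition cc :: "int \<Rightarrow> nat \<Rightarrow> 'k" where
  "cc n j = (-1) ^ j * (of_int n gchoose j)"

definition PI :: "int \<Rightarrow> (int \<Rightarrow> int \<Rightarrow> 'm) \<Rightarrow> (int \<Rightarrow> int \<Rightarrow> 'm) \<Rightarrow> int \<Rightarrow> 'm" where
  "PI n X W m = Sum_any (\<lambda>j::nat. cc n j *s X (n - int j) (m + int j))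
     - ((-1) powi n) *s Sum_any (\<lambda>j::nat. cc n j *s W (int j) (m + n - int j))"

lemma PI_fin:
  assumes "Xs Q X" "Ws P W" "int K \<ge> Q - m" "int K \<ge> P"
  shows "PI n X W m = (\<Sum>j<K. cc n j *s X (n - int j) (m + int j))
     - ((-1) powi n) *s (\<Sum>j<K. cc n j *s W (int j) (m + n - int j))"
proof -
  have 1: "Sum_any (\<lambda>j::nat. cc n j *s X (n - int j) (m + int j))
     = (\<Sum>j<K. cc n j *s X (n - int j) (m + int j))"
    by (rule SA_nat) (use assms in \<open>auto simp: Xs_def\<close>)
  have 2: "Sum_any (\<lambda>j::nat. cc n j *s W (int j) (m + n - int j))
     = (\<Sum>j<K. cc n j *s W (int j) (m + n - int j))"
    by (rule SA_nat) (use assms in \<open>auto simp: Ws_def\<close>)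
  show ?thesis unfolding PI_def 1 2 ..
qed

lemma cc_Suc: "cc (n + 1) (Suc j) = cc n (Suc j) - cc n j"
  unfolding cc_def using gbinomial_Suc_Suc[of "of_int n :: 'k" j] by (simp add: algebra_simps)

lemma cc_0[simp]: "cc n 0 = 1" by (simp add: cc_def)

lemma pascal_gen:
  "(\<Sum>j<Suc K. cc (n + 1) j *s f j) = (\<Sum>j<Suc K. cc n j *s (f j - f (Suc j))) + cc n K *s f (Suc K)"
proof (induction K)
  case 0
  then show ?case by (simp add: scale_right_diff_distrib)
next
  case (Suc K)
  have "(\<Sum>j<Suc (Suc K). cc (n + 1) j *s f j) = (\<Sum>j<Suc K. cc (n + 1) j *s f j) + cc (n+1) (Suc K) *s f (Suc K)"
    by simp
  also have "\<dots> = (\<Sum>j<Suc K. cc n j *s (f j - f (Suc j))) + cc n K *s f (Suc K) + (cc n (Suc K) - cc n K) *s f (Suc K)"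
    by (simp only: Suc cc_Suc)
  also have "\<dots> = (\<Sum>j<Suc (Suc K). cc n j *s (f j - f (Suc j))) + cc n (Suc K) *s f (Suc (Suc K))"
    by (simp only: sum.lessThan_Suc[of _ "Suc K"]) (simp add: algebra_simps del: sum.lessThan_Suc)
  finally show ?case .
qed

lemma pascal:
  assumes "f (Suc K) = 0"
  shows "(\<Sum>j<Suc K. cc (n + 1) j *s f j) = (\<Sum>j<Suc K. cc n j *s (f j - f (Suc j)))"
  using pascal_gen[where n=n and K=K and f=f] assms by simp

lemma PI_M1:
  assumes X: "Xs Q X" and W: "Ws P W"
  shows "PI n (M1 X) (M1 W) m = PI (n + 1) X W m"
proof -
  define K where "K = nat (Q - m) + nat P"
  have K1: "int K \<ge> Q - m" "int K \<ge> P" unfolding K_def by auto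
  have a: "PI (n + 1) X W m = (\<Sum>j<Suc K. cc (n+1) j *s X (n + 1 - int j) (m + int j))
     - ((-1) powi (n+1)) *s (\<Sum>j<Suc K. cc (n+1) j *s W (int j) (m + (n+1) - int j))"
    by (rule PI_fin[OF X W]) (use K1 in auto)
  have b: "PI n (M1 X) (M1 W) m = (\<Sum>j<Suc K. cc n j *s M1 X (n - int j) (m + int j))
     - ((-1) powi n) *s (\<Sum>j<Suc K. cc n j *s M1 W (int j) (m + n - int j))"
    by (rule PI_fin[OF Xs_M1[OF X] Ws_M1[OF W]]) (use K1 in auto)
  have c: "(\<Sum>j<Suc K. cc (n+1) j *s X (n + 1 - int j) (m + int j))
      = (\<Sum>j<Suc K. cc n j *s M1 X (n - int j) (m + int j))"
  proof -
    have "(\<Sum>j<Suc K. cc (n+1) j *s X (n + 1 - int j) (m + int j))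
      = (\<Sum>j<Suc K. cc n j *s (X (n + 1 - int j) (m + int j) - X (n + 1 - int (Suc j)) (m + int (Suc j))))"
      by (rule pascal) (use X K1 in \<open>auto simp: Xs_def\<close>)
    then show ?thesis by (simp add: M1_def algebra_simps)
  qed
  have d: "(\<Sum>j<Suc K. cc (n+1) j *s W (int j) (m + (n+1) - int j))
      = - (\<Sum>j<Suc K. cc n j *s M1 W (int j) (m + n - int j))"
  proof -
    have "(\<Sum>j<Suc K. cc (n+1) j *s W (int j) (m + (n+1) - int j))
      = (\<Sum>j<Suc K. cc n j *s (W (int j) (m + (n+1) - int j) - W (int (Suc j)) (m + (n+1) - int (Suc j))))"
      by (rule pascal) (use W K1 in \<open>auto simp: Ws_def\<close>)
    also have "\<dots> = (\<Sum>j<Suc K. - (cc n j *s M1 W (int j) (m + n - int j)))"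
      by (rule sum.cong) (auto simp: M1_def algebra_simps)
    finally show ?thesis by (simp add: sum_negf)
  qed
  show ?thesis unfolding a b c d by (simp add: power_int_add algebra_simps del: sum.lessThan_Suc)
qed


lemma PI_neg: "PI n (\<lambda>p q. - X p q) (\<lambda>p q. - W p q) m = - PI n X W m"
  by (simp add: PI_def SA_neg)

lemma PI_scale: "PI n (\<lambda>p q. c *s X p q) (\<lambda>p q. c *s W p q) m = c *s PI n X W m"
proof -
  have a: "Sum_any (\<lambda>j::nat. cc n j *s (c *s X (n - int j) (m + int j))) = c *s Sum_any (\<lambda>j::nat. cc n j *s X (n - int j) (m + int j))"
    unfolding SA_scale[symmetric] by (simp add: mult.commute)
  have b: "Sum_any (\<lambda>j::nat. cc n j *s (c *s W (int j) (m + n - int j))) = c *s Sum_any (\<lambda>j::nat. cc n j *s W (int j) (m + n - int j))"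
    unfolding SA_scale[symmetric] by (simp add: mult.commute)
  show ?thesis unfolding PI_def a b by (simp add: scale_right_diff_distrib mult.commute)
qed

lemma PI_diff:
  assumes "Xs Q X1" "Ws P W1" "Xs Q X2" "Ws P W2"
  shows "PI n (\<lambda>p q. X1 p q - X2 p q) (\<lambda>p q. W1 p q - W2 p q) m = PI n X1 W1 m - PI n X2 W2 m"
proof -
  define K where "K = nat (Q - m) + nat P"
  have K1: "int K \<ge> Q - m" "int K \<ge> P" unfolding K_def by auto
  have "Xs Q (\<lambda>p q. X1 p q - X2 p q)" "Ws P (\<lambda>p q. W1 p q - W2 p q)"
    using assms by (auto simp: Xs_def Ws_def)
  note f = PI_fin[OF this K1] PI_fin[OF assms(1,2) K1] PI_fin[OF assms(3,4) K1]
  show ?thesis unfolding f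
    by (simp only: scale_right_diff_distrib sum_subtractf) (simp add: algebra_simps)
qed

definition skewAt where
  "skewAt X W n m \<longleftrightarrow> PI n (tr W) (tr X) m
     = Sum_any (\<lambda>i::nat. ((-1) powi (n + 1 + int i)) *s (cc m i *s PI (n + int i) X W (m - int i)))"

definition skw where "skw X W \<longleftrightarrow> (\<forall>n m. skewAt X W n m)"

lemma skewAt_M1:
  assumes X: "Xs Q X" and W: "Ws P W"
  shows "skewAt (M1 X) (M1 W) n m \<longleftrightarrow> skewAt X W (n + 1) m"
proof -
  have l: "PI n (tr (M1 W)) (tr (M1 X)) m = - PI (n + 1) (tr W) (tr X) m"
    unfolding tr_M1 PI_neg PI_M1[OF W[unfolded Ws_tr] X[unfolded Xs_tr]] ..
  have r: "Sum_any (\<lambda>i::nat. ((-1) powi (n + 1 + int i)) *s (cc m i *s PI (n + int i) (M1 X) (M1 W) (m - int i)))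
     = - Sum_any (\<lambda>i::nat. ((-1) powi (n + 1 + 1 + int i)) *s (cc m i *s PI (n + 1 + int i) X W (m - int i)))"
  proof -
    have "Sum_any (\<lambda>i::nat. ((-1) powi (n + 1 + int i)) *s (cc m i *s PI (n + int i) (M1 X) (M1 W) (m - int i)))
      = Sum_any (\<lambda>i::nat. - (((-1) powi (n + 1 + 1 + int i)) *s (cc m i *s PI (n + 1 + int i) X W (m - int i))))"
      by (rule Sum_any.cong) (simp add: PI_M1[OF X W] power_int_add ac_simps)
    then show ?thesis by (simp add: SA_neg)
  qed
  show ?thesis unfolding skewAt_def l r by (simp add: ac_simps)
qed

lemma skw_M1:
  assumes X: "Xs Q X" and W: "Ws P W"
  shows "skw (M1 X) (M1 W) \<longleftrightarrow> skw X W"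
  unfolding skw_def skewAt_M1[OF X W]
proof safe
  fix n m assume "\<forall>n m. skewAt X W (n + 1) m"
  then have "skewAt X W (n - 1 + 1) m" by blast
  then show "skewAt X W n m" by simp
qed simp

lemma Xs_M1p: "Xs Q X \<Longrightarrow> Xs Q ((M1 ^^ k) X)" by (induction k) (auto simp: Xs_M1)
lemma Ws_M1p: "Ws P X \<Longrightarrow> Ws P ((M1 ^^ k) X)" by (induction k) (auto simp: Ws_M1)

lemma PI_M1p:
  assumes "Xs Q X" "Ws P W"
  shows "PI n ((M1 ^^ k) X) ((M1 ^^ k) W) m = PI (n + int k) X W m"
  using assms
proof (induction k arbitrary: n)
  case 0 then show ?case by simp
next
  case (Suc k)
  have "PI n ((M1 ^^ Suc k) X) ((M1 ^^ Suc k) W) m = PI (n + 1) ((M1 ^^ k) X) ((M1 ^^ k) W) m"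
    using PI_M1[OF Xs_M1p[OF Suc.prems(1)] Ws_M1p[OF Suc.prems(2)]] by simp
  also have "\<dots> = PI (n + int (Suc k)) X W m" using Suc by (simp add: ac_simps)
  finally show ?case .
qed

lemma PI_0: "PI 0 X W m = X 0 m - W 0 m"
proof -
  have a: "Sum_any (\<lambda>j::nat. cc 0 j *s X (0 - int j) (m + int j)) = X 0 m"
    by (subst SA_nat[where K=1]) (auto simp: cc_def gbinomial_0_left)
  have b: "Sum_any (\<lambda>j::nat. cc 0 j *s W (int j) (m + 0 - int j)) = W 0 m"
    by (subst SA_nat[where K=1]) (auto simp: cc_def gbinomial_0_left)
  show ?thesis unfolding PI_def a b by simp
qed

lemma BZ:
  assumes X: "Xs Q X" and W: "Ws P W" and h: "\<And>n m. n \<ge> 0 \<Longrightarrow> PI n X W m = 0"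
  shows "p \<ge> 0 \<Longrightarrow> X p q = W p q"
proof -
  have base: "(M1 ^^ k) X 0 m = (M1 ^^ k) W 0 m" for k m
    using PI_M1p[OF X W, of 0 k m] h[of "int k" m] by (simp add: PI_0)
  have "(M1 ^^ k) X (int t) q = (M1 ^^ k) W (int t) q" for t k q
  proof (induction t arbitrary: k q)
    case 0 then show ?case using base by simp
  next
    case (Suc t)
    have e: "(M1 ^^ k) F (1 + int t) q = (M1 ^^ Suc k) F (int t) q + (M1 ^^ k) F (int t) (q + 1)" for F :: "int \<Rightarrow> int \<Rightarrow> 'm"
      by (simp add: M1_def add.commute)
    show ?case using Suc[of "Suc k" q] Suc[of k "q+1"] by (simp only: e of_nat_Suc)
  qed
  then show "p \<ge> 0 \<Longrightarrow> X p q = W p q"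
    by (metis funpow_0 nonneg_int_cases)
qed


lemma SA_inj_reindex:
  fixes g :: "'b \<Rightarrow> 'a::comm_monoid_add" and h :: "'c \<Rightarrow> 'a"
  assumes "inj f" "\<And>j. h (f j) = g j" "\<And>a. a \<notin> range f \<Longrightarrow> h a = 0"
  shows "Sum_any g = Sum_any h"
proof -
  have e: "{a. h a \<noteq> 0} = f ` {j. g j \<noteq> 0}"
    using assms(2,3) by (auto simp: image_iff) (metis rangeE)
  have "Sum_any h = sum h (f ` {j. g j \<noteq> 0})" by (simp add: Sum_any.expand_set e)
  also have "\<dots> = sum (h \<circ> f) {j. g j \<noteq> 0}"
    by (rule sum.reindex) (use assms(1) in \<open>auto intro: inj_on_subset\<close>)
  also have "\<dots> = Sum_any g" by (simp add: Sum_any.expand_set assms(2) o_def)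
  finally show ?thesis ..
qed

definition cf :: "int \<Rightarrow> int \<Rightarrow> 'k" where
  "cf k a = (if a \<le> k then cc k (nat (k - a)) else 0) - (if 0 \<le> a then (-1) powi k * cc k (nat a) else 0)"

lemma gb_nat: "(of_nat N gchoose j :: 'k) = of_nat (N choose j)" by (simp add: binomial_gbinomial)

lemma m1_pow: "(-1::'k) ^ j = (if even j then 1 else -1)"
  by (simp add: minus_one_power_iff)
lemma m1_powi: "(-1::'k) powi e = (if even e then 1 else -1)"
  by (simp add: power_int_minus_left)

lemma cf_nonneg: 
  assumes "k \<ge> 0" shows "cf k a = 0"
proof -
  obtain K where k: "k = int K" using assms by (metis nonneg_int_cases)
  show ?thesis
  proof (cases "a < 0")
    case True
    then have "nat (k - a) > K" using k by auto
    then show ?thesis using True by (simp add: cf_def cc_def k gb_nat binomial_eq_0)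
  next
    case False
    then obtain A where a: "a = int A" by (metis nonneg_int_cases not_less)
    show ?thesis
    proof (cases "A \<le> K")
      case True
      have n: "nat (int K - int A) = K - A" using True by auto
      have s: "K choose (K - A) = K choose A" using True by (simp add: binomial_symmetric[symmetric])
      have ev: "even (K - A) \<longleftrightarrow> (even K \<longleftrightarrow> even A)" using True by (auto simp: even_diff_nat)
      show ?thesis using True unfolding cf_def cc_def k a
        by (simp add: n gb_nat s m1_pow m1_powi ev)
    next
      case False
      then show ?thesis unfolding cf_def cc_def k a by (simp add: gb_nat binomial_eq_0)
    qed
  qed
qed

lemma cf_neg: "cf (-1 - int l) a = (of_int (-a-1) gchoose l)"
proof (cases "a \<le> -1 - int l")
  case True
  define d where "d = nat (-1 - int l - a)"
  have a: "a = -1 - int l - int d" using True unfolding d_def by auto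
  have "cf (-1 - int l) a = cc (-1 - int l) d" using True unfolding cf_def d_def by simp
  also have "\<dots> = (of_nat (d + l) gchoose d)"
    unfolding cc_def by (subst gbinomial_negated_upper) (simp add: algebra_simps)
  also have "\<dots> = (of_nat (d + l) gchoose l)"
  proof -
    have "(d + l) choose d = (d + l) choose l" by (metis add_diff_cancel_left' binomial_symmetric le_add1)
    then show ?thesis by (simp only: gb_nat)
  qed
  also have "\<dots> = (of_int (-a-1) gchoose l)"
    unfolding a by simp
  finally show ?thesis .
next
  case False
  show ?thesis
  proof (cases "a < 0")
    case True
    then have "-a-1 \<ge> 0" by simp
    then obtain e where e: "-a-1 = int e" by (metis nonneg_int_cases)
    have "e < l" using False e by linarith
    then show ?thesis using False True unfolding cf_def by (simp add: e gb_nat binomial_eq_0)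
  next
    case False2: False
    then obtain A where a: "a = int A" by (metis nonneg_int_cases not_less)
    have "cf (-1 - int l) a = - ((-1) powi (-1 - int l) * cc (-1 - int l) A)"
      using False unfolding cf_def a by simp
    also have "\<dots> = (-1) ^ l * (of_nat (A + l) gchoose A)"
    proof -
      have g: "(of_int (-1 - int l) gchoose A :: 'k) = (-1)^A * (of_nat (A + l) gchoose A)"
        by (subst gbinomial_negated_upper) (simp add: algebra_simps)
      have p: "- ((-1::'k) powi (-1 - int l)) = (-1)^l" by (simp add: m1_powi m1_pow)
      have "- ((-1) powi (-1 - int l) * cc (-1 - int l) A) = (- ((-1::'k) powi (-1 - int l))) * ((-1)^A * (-1)^A) * (of_nat (A + l) gchoose A)"
        unfolding cc_def g by (simp add: algebra_simps)
      then show ?thesis unfolding p by simp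
    qed
    also have "\<dots> = (of_int (-a-1) gchoose l)"
    proof -
      have g: "(of_int (-a-1) gchoose l :: 'k) = (-1)^l * (of_nat (A + l) gchoose l)"
        by (subst gbinomial_negated_upper) (simp add: algebra_simps a)
      have "(A + l) choose A = (A + l) choose l" by (metis add_diff_cancel_left' binomial_symmetric le_add1)
      then have "(of_nat (A + l) gchoose A :: 'k) = of_nat (A + l) gchoose l" by (simp only: gb_nat)
      then show ?thesis unfolding g by simp
    qed
    finally show ?thesis .
  qed
qed


lemma fin_diag:
  assumes "Xs Q U" "Ws P U"
  shows "{a. U a (s - a) \<noteq> 0} \<subseteq> {s - Q + 1..P - 1}"
proof
  fix a assume "a \<in> {a. U a (s - a) \<noteq> 0}"
  then have "\<not> P \<le> a" "\<not> Q \<le> s - a" using assms unfolding Xs_def Ws_def by auto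
  then show "a \<in> {s - Q + 1..P - 1}" by auto
qed

lemma PI_int:
  assumes X: "Xs Q U" and W: "Ws P U"
  shows "PI k U U r = Sum_any (\<lambda>a. cf k a *s U a (k + r - a))"
proof -
  have fin: "finite {a. U a (k + r - a) \<noteq> 0}"
    by (rule finite_subset[OF fin_diag[OF X W]]) simp
  have 1: "Sum_any (\<lambda>j::nat. cc k j *s U (k - int j) (r + int j))
      = Sum_any (\<lambda>a. if a \<le> k then cc k (nat (k - a)) *s U a (k + r - a) else 0)"
  proof (rule SA_inj_reindex[where f="\<lambda>j. k - int j"])
    show "inj (\<lambda>j. k - int j)" by (auto simp: inj_def)
    fix a assume "a \<notin> range (\<lambda>j. k - int j)"
    moreover have "a \<le> k \<Longrightarrow> a = k - int (nat (k - a))" by simp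
    ultimately show "(if a \<le> k then cc k (nat (k - a)) *s U a (k + r - a) else 0) = 0" by (metis rangeI)
  qed (simp add: algebra_simps)
  have 2: "Sum_any (\<lambda>j::nat. cc k j *s U (int j) (r + k - int j))
      = Sum_any (\<lambda>a. if 0 \<le> a then cc k (nat a) *s U a (k + r - a) else 0)"
  proof (rule SA_inj_reindex[where f="int"])
    show "inj int" by (auto simp: inj_def)
    fix a assume "a \<notin> range int"
    moreover have "0 \<le> a \<Longrightarrow> a = int (nat a)" by simp
    ultimately show "(if 0 \<le> a then cc k (nat a) *s U a (k + r - a) else 0) = 0" by (metis rangeI)
  qed (simp add: algebra_simps)
  have "PI k U U r = Sum_any (\<lambda>a. if a \<le> k then cc k (nat (k - a)) *s U a (k + r - a) else 0)
      - Sum_any (\<lambda>a. (-1) powi k *s (if 0 \<le> a then cc k (nat a) *s U a (k + r - a) else 0))"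
    unfolding PI_def 1 2 SA_scale ..
  also have "\<dots> = Sum_any (\<lambda>a. (if a \<le> k then cc k (nat (k - a)) *s U a (k + r - a) else 0)
      - (-1) powi k *s (if 0 \<le> a then cc k (nat a) *s U a (k + r - a) else 0))"
    by (rule SA_diff[symmetric]; rule finite_subset[OF _ fin]) auto
  also have "\<dots> = Sum_any (\<lambda>a. cf k a *s U a (k + r - a))"
    by (rule Sum_any.cong) (simp add: cf_def scale_left_diff_distrib)
  finally show ?thesis .
qed

lemma cf_SI: "Sum_any (\<lambda>i::nat. (-1) powi (n + 1 + int i) * cc m i * cf (n + int i) a) = cf n (n + m - a)"
proof (cases "n \<ge> 0")
  case True
  then show ?thesis by (simp add: cf_nonneg)
next
  case False
  define k where "k = nat (- n - 1)"
  have n: "n = -1 - int k" using False unfolding k_def by simp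
  have "Sum_any (\<lambda>i::nat. (-1) powi (n + 1 + int i) * cc m i * cf (n + int i) a)
     = (\<Sum>i<Suc k. (-1) powi (n + 1 + int i) * cc m i * cf (n + int i) a)"
    by (rule SA_nat) (simp add: cf_nonneg n)
  also have "\<dots> = (\<Sum>i\<in>{0..k}. (-1)^k * ((of_int m gchoose i) * (of_int (-a-1) gchoose (k - i))))"
  proof (rule sum.cong)
    fix i assume "i \<in> {0..k}"
    then have i: "i \<le> k" by simp
    then have ni: "n + int i = -1 - int (k - i)" by (simp add: n)
    have ev: "even (n + 1 + int i) \<longleftrightarrow> (even i \<longleftrightarrow> even k)" by (simp add: n)
    show "(-1) powi (n + 1 + int i) * cc m i * cf (n + int i) a = (-1)^k * ((of_int m gchoose i) * (of_int (-a-1) gchoose (k - i)))"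
    proof -
      have sg: "(-1::'k) powi (n + 1 + int i) * (-1)^i = (-1)^k"
        using ev by (simp add: m1_powi m1_pow)
      have "(-1) powi (n + 1 + int i) * cc m i * cf (n + int i) a
          = ((-1::'k) powi (n + 1 + int i) * (-1)^i) * ((of_int m gchoose i) * (of_int (-a-1) gchoose (k - i)))"
        unfolding ni cf_neg cc_def by (simp only: mult_ac)
      then show ?thesis unfolding sg .
    qed
  qed (simp add: atLeast0AtMost lessThan_Suc_atMost)
  also have "\<dots> = (-1)^k * ((of_int m + of_int (-a-1)) gchoose k)"
    by (simp add: sum_distrib_left[symmetric] gbinomial_Vandermonde)
  also have "\<dots> = cf n (n + m - a)"
    unfolding n cf_neg
    by (subst (2) gbinomial_negated_upper) (simp add: algebra_simps)
  finally show ?thesis .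
qed

lemma cf_supp: "cf (n + int x) a \<noteq> 0 \<Longrightarrow> x < nat (- n)"
proof -
  assume "cf (n + int x) a \<noteq> 0"
  then have "\<not> (n + int x \<ge> 0)" using cf_nonneg by blast
  then have "int x < - n" by linarith
  then show ?thesis by simp
qed

lemma skw_UU:
  assumes X: "Xs Q U" and W: "Ws P U"
  shows "skw U U"
  unfolding skw_def skewAt_def
proof (intro allI)
  fix n m
  have L: "PI n (tr U) (tr U) m = Sum_any (\<lambda>a. cf n (n + m - a) *s U a (n + m - a))"
  proof -
    have "PI n (tr U) (tr U) m = Sum_any (\<lambda>b. cf n b *s tr U b (n + m - b))"
      by (rule PI_int[OF W[unfolded Ws_tr] X[unfolded Xs_tr]])
    also have "\<dots> = Sum_any (\<lambda>a. cf n (n + m - a) *s U a (n + m - a))"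
    proof (rule Sum_any.reindex_cong[where l="\<lambda>a. n + m - a"])
      show "bij (\<lambda>a::int. n + m - a)"
        by (rule o_bij[where g="\<lambda>a. n + m - a"]) (simp_all add: fun_eq_iff)
      show "(\<lambda>b. cf n b *s tr U b (n + m - b)) \<circ> (\<lambda>a. n + m - a) = (\<lambda>a. cf n (n + m - a) *s U a (n + m - a))"
        by (simp add: tr_def o_def)
    qed
    finally show ?thesis .
  qed
  have fin: "finite {a. U a (n + m - a) \<noteq> 0}"
    by (rule finite_subset[OF fin_diag[OF X W]]) simp
  have "Sum_any (\<lambda>i::nat. ((-1) powi (n + 1 + int i)) *s (cc m i *s PI (n + int i) U U (m - int i)))
     = Sum_any (\<lambda>i::nat. Sum_any (\<lambda>a. ((-1) powi (n + 1 + int i) * cc m i * cf (n + int i) a) *s U a (n + m - a)))"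
    by (rule Sum_any.cong) (simp add: PI_int[OF X W] SA_scale[symmetric] algebra_simps)
  also have "\<dots> = Sum_any (\<lambda>a. Sum_any (\<lambda>i::nat. ((-1) powi (n + 1 + int i) * cc m i * cf (n + int i) a) *s U a (n + m - a)))"
  proof (rule Sum_any.swap[where C="{..<nat (- n)} \<times> {a. U a (n + m - a) \<noteq> 0}"])
    show "finite ({..<nat (- n)} \<times> {a. U a (n + m - a) \<noteq> 0})" using fin by simp
    show "{i. \<exists>a. ((-1) powi (n + 1 + int i) * cc m i * cf (n + int i) a) *s U a (n + m - a) \<noteq> 0} \<times>
          {a. \<exists>i. ((-1) powi (n + 1 + int i) * cc m i * cf (n + int i) a) *s U a (n + m - a) \<noteq> 0}
          \<subseteq> {..<nat (- n)} \<times> {a. U a (n + m - a) \<noteq> 0}"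
      by (auto simp: cf_supp)
  qed
  also have "\<dots> = Sum_any (\<lambda>a. cf n (n + m - a) *s U a (n + m - a))"
  proof (rule Sum_any.cong)
    fix a
    have "finite {i::nat. (-1) powi (n + 1 + int i) * cc m i * cf (n + int i) a \<noteq> 0}"
      by (rule finite_subset[of _ "{..<nat (- n)}"]) (auto simp: cf_supp)
    then show "Sum_any (\<lambda>i::nat. ((-1) powi (n + 1 + int i) * cc m i * cf (n + int i) a) *s U a (n + m - a))
        = cf n (n + m - a) *s U a (n + m - a)"
      by (simp add: SA_scale_left cf_SI)
  qed
  finally show "PI n (tr U) (tr U) m = Sum_any (\<lambda>i::nat. ((-1) powi (n + 1 + int i)) *s (cc m i *s PI (n + int i) U U (m - int i)))"
    unfolding L by simp
qed


lemma Xs_mono: "Xs Q X \<Longrightarrow> Q \<le> Q' \<Longrightarrow> Xs Q' X" by (auto simp: Xs_def)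
lemma Ws_mono: "Ws P X \<Longrightarrow> P \<le> P' \<Longrightarrow> Ws P' X" by (auto simp: Ws_def)

lemma PI_UU_nonneg:
  assumes "Xs Q U" "Ws P U" "n \<ge> 0"
  shows "PI n U U m = 0"
proof -
  obtain k where n: "n = int k" using assms(3) by (metis nonneg_int_cases)
  show ?thesis using PI_M1p[OF assms(1,2), of 0 k m] by (simp add: PI_0 n)
qed

lemma PI_zero2: "PI n R (\<lambda>p q. 0) r = Sum_any (\<lambda>j::nat. cc n j *s R (n - int j) (r + int j))"
  by (simp add: PI_def)

lemma PI_zero1: 
  assumes "\<And>p q. q \<ge> 0 \<Longrightarrow> R p q = 0"
  shows "PI n (\<lambda>p q. 0) (tr R) r = 0"
  using assms by (simp add: PI_def tr_def)

lemma L1_0: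
  assumes X: "Xs Q X" and W: "Ws P W" and h: "\<And>n m. n \<ge> 0 \<Longrightarrow> PI n X W m = 0" and sk: "skw X W"
  shows "X = W"
proof -
  have e1: "\<And>p q. p \<ge> 0 \<Longrightarrow> X p q = W p q" using BZ[OF X W h] .
  have h2: "PI n (tr W) (tr X) m = 0" if n: "n \<ge> 0" for n m
  proof -
    have "PI n (tr W) (tr X) m = Sum_any (\<lambda>i::nat. ((-1) powi (n + 1 + int i)) *s (cc m i *s PI (n + int i) X W (m - int i)))"
      using sk unfolding skw_def skewAt_def by blast
    also have "\<dots> = 0" using n by (simp add: h)
    finally show ?thesis .
  qed
  have e2: "X p q = W p q" if "q \<ge> 0" for p q
    using BZ[OF W[unfolded Ws_tr] X[unfolded Xs_tr] h2 that, of p] by (simp add: tr_def)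
  define Q' where "Q' = max Q 0"
  define P' where "P' = max P 0"
  have X1: "Xs Q' X" using X by (rule Xs_mono) (simp add: Q'_def)
  have W1: "Ws P' W" using W by (rule Ws_mono) (simp add: P'_def)
  have X2: "Ws P' X" using W e1 unfolding Ws_def P'_def by fastforce
  have W2: "Xs Q' W" using X e2 unfolding Xs_def Q'_def by fastforce
  have sWW: "skw W W" by (rule skw_UU[OF W2 W1])
  define R where "R = (\<lambda>p q. X p q - W p q)"
  have R0: "R p q = 0" if "p \<ge> 0 \<or> q \<ge> 0" for p q using e1 e2 that by (auto simp: R_def)
  have PIR: "PI n R (\<lambda>p q. 0) m = PI n X W m - PI n W W m" for n m
  proof -
    have "PI n R (\<lambda>p q. W p q - W p q) m = PI n X W m - PI n W W m"
      unfolding R_def by (rule PI_diff[OF X1 W1 W2 W1])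
    then show ?thesis by simp
  qed
  have PIRt: "PI n (\<lambda>p q. 0) (tr R) m = PI n (tr W) (tr X) m - PI n (tr W) (tr W) m" for n m
  proof -
    have "PI n (\<lambda>p q. tr W p q - tr W p q) (\<lambda>p q. tr X p q - tr W p q) m = PI n (tr W) (tr X) m - PI n (tr W) (tr W) m"
      by (rule PI_diff[OF W1[unfolded Ws_tr] X1[unfolded Xs_tr] W1[unfolded Ws_tr] W2[unfolded Xs_tr]])
    moreover have "(\<lambda>p q. tr X p q - tr W p q) = tr R" by (simp add: fun_eq_iff tr_def R_def)
    ultimately show ?thesis by simp
  qed
  have hWW: "PI n W W m = 0" if "n \<ge> 0" for n m using PI_UU_nonneg[OF W2 W1 that] .
  have hR: "PI n R (\<lambda>p q. 0) m = 0" if "n \<ge> 0" for n m using PIR h hWW that by simp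
  have G: "PI (-1 - int l) R (\<lambda>p q. 0) r = 0" for l r
  proof (induction l arbitrary: r rule: less_induct)
    case (less l)
    define n where "n = -1 - int l"
    define f where "f = (\<lambda>i::nat. ((-1) powi (n + 1 + int i)) *s (cc r i *s PI (n + int i) X W (r - int i)))"
    define g where "g = (\<lambda>i::nat. ((-1) powi (n + 1 + int i)) *s (cc r i *s PI (n + int i) W W (r - int i)))"
    have fz: "f i = 0" "g i = 0" if "i \<ge> Suc l" for i
      using that by (auto simp: f_def g_def n_def h hWW)
    have "0 = PI n (tr W) (tr X) r - PI n (tr W) (tr W) r"
      unfolding PIRt[symmetric] by (rule PI_zero1[symmetric]) (use R0 in auto)
    also have "\<dots> = Sum_any f - Sum_any g"
      using sk sWW unfolding skw_def skewAt_def f_def g_def by simp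
    also have "\<dots> = Sum_any (\<lambda>i. f i - g i)"
      by (rule SA_diff[symmetric]; rule finite_subset[of _ "{..<Suc l}"]) (use fz in \<open>auto simp: not_less[symmetric]\<close>)
    also have "\<dots> = Sum_any (\<lambda>i::nat. ((-1) powi (n + 1 + int i)) *s (cc r i *s PI (n + int i) R (\<lambda>p q. 0) (r - int i)))"
      by (rule Sum_any.cong) (simp add: f_def g_def PIR scale_right_diff_distrib)
    also have "\<dots> = (\<Sum>i<1. ((-1) powi (n + 1 + int i)) *s (cc r i *s PI (n + int i) R (\<lambda>p q. 0) (r - int i)))"
    proof (rule SA_nat)
      fix i :: nat assume i: "i \<ge> 1"
      show "((-1) powi (n + 1 + int i)) *s (cc r i *s PI (n + int i) R (\<lambda>p q. 0) (r - int i)) = 0"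
      proof (cases "i \<le> l")
        case True
        then have "n + int i = -1 - int (l - i)" by (simp add: n_def)
        moreover have "l - i < l" using i True by simp
        ultimately show ?thesis using less.IH by simp
      next
        case False
        then show ?thesis by (simp add: n_def hR)
      qed
    qed
    also have "\<dots> = ((-1) powi (n + 1)) *s PI n R (\<lambda>p q. 0) r" by simp
    finally have "((-1) powi (n + 1)) *s PI n R (\<lambda>p q. 0) r = 0" by simp
    then show ?case by (simp add: n_def)
  qed
  have RR: "\<forall>p q. q \<ge> - int t \<longrightarrow> R p q = 0" for t
  proof (induction t)
    case 0 then show ?case using R0 by simp
  next
    case (Suc t)
    show ?case
    proof (intro allI impI)
      fix p q assume q: "q \<ge> - int (Suc t)"
      show "R p q = 0"
      proof (cases "q \<ge> - int t \<or> p \<ge> 0")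
        case True then show ?thesis using Suc R0 by auto
      next
        case False
        then have qq: "q = -1 - int t" and pp: "p < 0" using q by auto
        define l where "l = nat (-1 - p)"
        have p: "p = -1 - int l" using pp unfolding l_def by simp
        have "0 = PI (-1 - int l) R (\<lambda>p q. 0) q" using G by simp
        also have "\<dots> = (\<Sum>j<1. cc (-1 - int l) j *s R (-1 - int l - int j) (q + int j))"
          unfolding PI_zero2 by (rule SA_nat) (use Suc qq in auto)
        also have "\<dots> = R p q" by (simp add: p)
        finally show ?thesis by simp
      qed
    qed
  qed
  have "R p q = 0" for p q using RR[of "nat (- q)"] by simp
  then show ?thesis by (auto simp: R_def fun_eq_iff)
qed

lemma L1_N:
  assumes "Xs Q X" "Ws P W" "\<And>n m. n \<ge> int N \<Longrightarrow> PI n X W m = 0" "skw X W"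
  shows "(M1 ^^ N) X = (M1 ^^ N) W"
  using assms
proof (induction N arbitrary: X W)
  case 0
  then show ?case using L1_0[of Q X P W] by simp
next
  case (Suc N)
  have "(M1 ^^ N) (M1 X) = (M1 ^^ N) (M1 W)"
  proof (rule Suc.IH[OF Xs_M1[OF Suc.prems(1)] Ws_M1[OF Suc.prems(2)]])
    fix n m :: int assume "n \<ge> int N"
    then show "PI n (M1 X) (M1 W) m = 0"
      using PI_M1[OF Suc.prems(1,2)] Suc.prems(3)[of "n+1"] by simp
  next
    show "skw (M1 X) (M1 W)" using skw_M1[OF Suc.prems(1,2)] Suc.prems(4) by simp
  qed
  then show ?case by (simp add: funpow_Suc_right del: funpow.simps)
qed

lemma L2_N:
  assumes "Xs Q X" "Ws P W" "(M1 ^^ N) X = (M1 ^^ N) W"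
  shows "skw X W"
  using assms
proof (induction N arbitrary: X W)
  case 0
  then show ?case using skw_UU[of Q X P] by simp
next
  case (Suc N)
  have "skw (M1 X) (M1 W)"
    by (rule Suc.IH[OF Xs_M1[OF Suc.prems(1)] Ws_M1[OF Suc.prems(2)]])
       (use Suc.prems(3) in \<open>simp add: funpow_Suc_right del: funpow.simps\<close>)
  then show ?case using skw_M1[OF Suc.prems(1,2)] by simp
qed

lemma M1p_sum:
  "(M1 ^^ N) X p q = (\<Sum>j<Suc N. cc (int N) j *s X (p + int N - int j) (q + int j))"
proof (induction N arbitrary: p q)
  case 0 then show ?case by simp
next
  case (Suc N)
  define f where "f = (\<lambda>j::nat. X (p + int N + 1 - int j) (q + int j))"
  have z: "cc (int N) (Suc N) = 0" by (simp add: cc_def gb_nat)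
  have "(M1 ^^ Suc N) X p q = (M1 ^^ N) X (p + 1) q - (M1 ^^ N) X p (q + 1)"
    by (simp add: M1_def)
  also have "\<dots> = (\<Sum>j<Suc N. cc (int N) j *s (f j - f (Suc j)))"
    unfolding Suc.IH by (simp add: f_def sum_subtractf scale_right_diff_distrib algebra_simps)
  also have "\<dots> = (\<Sum>j<Suc (Suc N). cc (int N) j *s (f j - f (Suc j))) + cc (int N) (Suc N) *s f (Suc (Suc N))"
    by (simp add: z)
  also have "\<dots> = (\<Sum>j<Suc (Suc N). cc (int N + 1) j *s f j)"
    by (rule pascal_gen[symmetric])
  also have "\<dots> = (\<Sum>j<Suc (Suc N). cc (int (Suc N)) j *s X (p + int (Suc N) - int j) (q + int j))"
    by (simp add: f_def algebra_simps)
  finally show ?case .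
qed

end

lemma linD:
  assumes "Vector_Spaces.linear s1 s2 f"
  shows "f (x + y) = f x + f y" "f (s1 c x) = s2 c (f x)" "f 0 = 0" "f (x - y) = f x - f y"
    "f (sum g A) = (\<Sum>a\<in>A. f (g a))"
proof -
  interpret Vector_Spaces.linear s1 s2 f by fact
  show "f (x + y) = f x + f y" "f (s1 c x) = s2 c (f x)" "f 0 = 0" "f (x - y) = f x - f y"
    "f (sum g A) = (\<Sum>a\<in>A. f (g a))"
    by (simp_all add: add scale diff sum)
qed

lemma super_vs_vs: "super_vs sc P \<Longrightarrow> vector_space sc" by (simp add: super_vs_def)

lemma zeta_sym: "zeta a b = zeta b a" by (auto simp: zeta_def)
lemma zeta_sq: "zeta a b * zeta a b = (1::'k::field)" by (auto simp: zeta_def)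

locale modsetup =
  fixes sc :: "'k::field_char_0 \<Rightarrow> 'v::ab_group_add \<Rightarrow> 'v"
    and P :: "bool \<Rightarrow> 'v set"
    and prd :: "int \<Rightarrow> 'v \<Rightarrow> 'v \<Rightarrow> 'v"
    and one :: 'v
    and scM :: "'k \<Rightarrow> 'm::ab_group_add \<Rightarrow> 'm"
    and PM :: "bool \<Rightarrow> 'm set"
    and Y :: "'v \<Rightarrow> 'm zfield"
  assumes V: "unital_zfold_algebra sc P prd one"
    and M: "zfold_module sc P prd one scM PM Y"
begin

lemma vsV: "vector_space sc" using V by (simp add: unital_zfold_algebra_def zfold_algebra_def super_vs_def)
lemma vsM: "vector_space scM" using M by (simp add: zfold_module_def super_vs_def)

sublocale vV: cvs sc by (rule cvs.intro[OF vsV])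
sublocale vM: cvs scM by (rule cvs.intro[OF vsM])

lemma linL: "Vector_Spaces.linear sc sc (prd n a)" using V by (simp add: unital_zfold_algebra_def zfold_algebra_def)
lemma linR: "Vector_Spaces.linear sc sc (\<lambda>a. prd n a b)" using V by (simp add: unital_zfold_algebra_def zfold_algebra_def)
lemma par: "a \<in> P p \<Longrightarrow> b \<in> P q \<Longrightarrow> prd n a b \<in> P (p \<noteq> q)"
  using V by (simp add: unital_zfold_algebra_def zfold_algebra_def)
lemma unit1: "prd n one a = (if n = -1 then a else 0)" using V by (simp add: unital_zfold_algebra_def)
lemma unit2: "n \<ge> 0 \<Longrightarrow> prd n a one = 0" using V by (simp add: unital_zfold_algebra_def)
lemma unit3: "prd (-1) a one = a" using V by (simp add: unital_zfold_algebra_def)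
lemma svsV: "super_vs sc P" using V by (simp add: unital_zfold_algebra_def zfold_algebra_def)

lemma prd_0L: "prd n 0 b = 0" using linD(3)[OF linR] .
lemma prd_0R: "prd n a 0 = 0" using linD(3)[OF linL] .

lemma one_even: "one \<in> P False"
proof -
  have sub: "vV.subspace (P r)" for r using svsV by (simp add: super_vs_def)
  have int0: "P False \<inter> P True = {0}" using svsV by (simp add: super_vs_def)
  have dec: "\<exists>x y. x \<in> P False \<and> y \<in> P True \<and> v = x + y" for v using svsV by (simp add: super_vs_def)
  obtain x y where x: "x \<in> P False" and y: "y \<in> P True" and o: "one = x + y" using dec by blast
  have hom: "prd (-1) y a = 0" if a: "a \<in> P r" for a r
  proof -
    have "a = prd (-1) x a + prd (-1) y a" using unit1[of "-1" a] o linD(1)[OF linR] by simp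
    then have e: "prd (-1) y a = a - prd (-1) x a" by (simp add: algebra_simps)
    have "prd (-1) x a \<in> P r" using par[OF x a] by simp
    then have "prd (-1) y a \<in> P r" unfolding e using sub a by (simp add: vV.subspace_diff)
    moreover have "prd (-1) y a \<in> P (\<not> r)" using par[OF y a] by simp
    ultimately show ?thesis using int0 by (cases r) auto
  qed
  have "prd (-1) y one = 0"
  proof -
    obtain u w where u: "u \<in> P False" and w: "w \<in> P True" and e: "one = u + w" using dec by blast
    show ?thesis unfolding e linD(1)[OF linL] using hom[OF u] hom[OF w] by simp
  qed
  then have "y = 0" using unit3[of y] by simp
  then show ?thesis using x o by simp
qed

lemma Yadd: "Y (sc c a + b) n v = scM c (Y a n v) + Y b n v" using M by (simp add: zfold_module_def)
lemma Y0: "Y 0 n v = 0"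
  using Yadd[of 1 0 0 n v] by simp
lemma Yscale: "Y (sc c a) n v = scM c (Y a n v)" using Yadd[of c a 0 n v] by (simp add: Y0)
lemma Yplus: "Y (a + b) n v = Y a n v + Y b n v" using Yadd[of 1 a b n v] by simp
lemma Ysum: "Y (sum f A) n v = (\<Sum>i\<in>A. Y (f i) n v)"
  by (induction A rule: infinite_finite_induct) (simp_all add: Y0 Yplus)
lemma YSA:
  assumes "finite {i. f i \<noteq> 0}"
  shows "Y (Sum_any f) n v = Sum_any (\<lambda>i. Y (f i) n v)"
proof -
  have "Y (Sum_any f) n v = (\<Sum>i\<in>{i. f i \<noteq> 0}. Y (f i) n v)" by (simp add: Sum_any.expand_set Ysum)
  also have "\<dots> = Sum_any (\<lambda>i. Y (f i) n v)"
    by (rule Sum_any.expand_superset[symmetric]) (use assms in \<open>auto simp: Y0\<close>)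
  finally show ?thesis .
qed
lemma Yhol: "hol_field scM (Y a)" using M by (simp add: zfold_module_def)
lemma Ylin: "Vector_Spaces.linear scM scM (Y a n)" using Yhol by (simp add: hol_field_def)
lemma Yvan: "\<exists>N. \<forall>n\<ge>N. Y a n v = 0" using Yhol by (simp add: hol_field_def)
lemma Ya0: "Y a n 0 = 0" using linD(3)[OF Ylin] .
lemma Yprd: "a \<in> P p \<Longrightarrow> b \<in> P q \<Longrightarrow> Y (prd n a b) = fprod scM p q n (Y a) (Y b)"
  using M by (simp add: zfold_module_def)
lemma Yone: "Y one = id_field" using M by (simp add: zfold_module_def)


lemma SA_single: "(\<And>j. j \<noteq> jz \<Longrightarrow> f j = 0) \<Longrightarrow> Sum_any f = f jz"
proof -
  assume h: "\<And>j. j \<noteq> jz \<Longrightarrow> f j = 0"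
  have "Sum_any f = Sum_any (\<lambda>j. if j = jz then f j else 0)" by (rule Sum_any.cong) (use h in auto)
  then show ?thesis by simp
qed

lemma g2: "(-1) ^ j * ((- 2::'k) gchoose j) = of_nat j + 1"
proof -
  have "((- 2::'k) gchoose j) = (-1)^j * ((of_nat j + 1) gchoose j)"
    by (subst gbinomial_negated_upper) simp
  also have "((of_nat j + 1 :: 'k) gchoose j) = of_nat j + 1"
    using binomial_gbinomial[of "Suc j" j, where 'a='k] by (simp add: add.commute)
  finally show ?thesis by simp
qed

lemma Ytrans:
  assumes c: "c \<in> P p"
  shows "Y (T1 prd one c) m v = scM (- of_int m) (Y c (m - 1) v)"
proof -
  define S1 where "S1 = Sum_any (\<lambda>j::nat. scM ((-1) ^ j * (of_int (-2) gchoose j)) (Y c (-2 - int j) (id_field (m + int j) v)))"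
  define S2 where "S2 = Sum_any (\<lambda>j::nat. scM ((-1) ^ j * (of_int (-2) gchoose j)) (id_field (m + (-2) - int j) (Y c (int j) v)))"
  have e: "Y (T1 prd one c) m v = S1 - S2"
    unfolding T1_def Yprd[OF c one_even] Yone fprod_def S1_def S2_def by (simp add: zeta_def)
  have t1: "scM ((-1) ^ j * (of_int (-2) gchoose j)) (Y c (-2 - int j) (id_field (m + int j) v))
      = (if int j = -1 - m then scM (of_nat j + 1) (Y c (-2 - int j) v) else 0)" for j
    by (auto simp: g2 id_field_def Ya0)
  have t2: "scM ((-1) ^ j * (of_int (-2) gchoose j)) (id_field (m + (-2) - int j) (Y c (int j) v))
      = (if int j = m - 1 then scM (of_nat j + 1) (Y c (int j) v) else 0)" for j
    by (auto simp: g2 id_field_def)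
  show ?thesis
  proof (cases "m \<le> -1")
    case True
    have "S1 = scM (of_nat (nat (-1 - m)) + 1) (Y c (-2 - int (nat (-1 - m))) v)"
      unfolding S1_def t1 by (subst SA_single[where jz="nat (-1 - m)"]) (use True in auto)
    also have "\<dots> = scM (- of_int m) (Y c (m - 1) v)" using True by (simp add: of_nat_nat)
    finally have 1: "S1 = scM (- of_int m) (Y c (m - 1) v)" .
    have 2: "S2 = 0" unfolding S2_def t2 using True by simp
    show ?thesis unfolding e 1 2 by simp
  next
    case False
    have 1: "S1 = 0" unfolding S1_def t1 using False by simp
    show ?thesis
    proof (cases "m \<ge> 1")
      case True
      have "S2 = scM (of_nat (nat (m - 1)) + 1) (Y c (int (nat (m - 1))) v)"
        unfolding S2_def t2 by (subst SA_single[where jz="nat (m - 1)"]) (use True in auto)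
      also have "\<dots> = scM (of_int m) (Y c (m - 1) v)" using True by (simp add: of_nat_nat)
      finally have 2: "S2 = scM (of_int m) (Y c (m - 1) v)" .
      show ?thesis unfolding e 1 2 by simp
    next
      case False2: False
      have m: "m = 0" using False False2 by simp
      have 2: "S2 = 0" unfolding S2_def t2 using m by simp
      show ?thesis using e 1 2 m by simp
    qed
  qed
qed

lemma T1_par: "c \<in> P p \<Longrightarrow> T1 prd one c \<in> P p"
  using par[OF _ one_even] by (simp add: T1_def)

lemma Y_T1pow:
  assumes c: "c \<in> P p"
  shows "(T1 prd one ^^ i) c \<in> P p \<and> (\<forall>m. Y ((T1 prd one ^^ i) c) m v
      = scM ((-1)^i * (\<Prod>t<i. (of_int m - of_nat t))) (Y c (m - int i) v))"
proof (induction i)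
  case 0 then show ?case using c by simp
next
  case (Suc i)
  have p: "(T1 prd one ^^ Suc i) c \<in> P p" using Suc T1_par by simp
  have "Y ((T1 prd one ^^ Suc i) c) m v = scM ((-1)^Suc i * (\<Prod>t<Suc i. (of_int m - of_nat t))) (Y c (m - int (Suc i)) v)" for m
  proof -
    have "Y ((T1 prd one ^^ Suc i) c) m v = scM (- of_int m) (Y ((T1 prd one ^^ i) c) (m - 1) v)"
      using Ytrans[of "(T1 prd one ^^ i) c" p] Suc by simp
    also have "\<dots> = scM (- of_int m * ((-1)^i * (\<Prod>t<i. (of_int (m - 1) - of_nat t)))) (Y c (m - 1 - int i) v)"
      using Suc by simp
    also have "(\<Prod>t<i. (of_int (m - 1) - of_nat t)) = (\<Prod>t<i. (of_int m - of_nat (Suc t) :: 'k))"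
      by (rule prod.cong) (simp_all add: algebra_simps)
    also have "- of_int m * ((-1)^i * (\<Prod>t<i. (of_int m - of_nat (Suc t) :: 'k))) = (-1)^Suc i * (\<Prod>t<Suc i. (of_int m - of_nat t))"
      by (simp add: prod.lessThan_Suc_shift del: prod.lessThan_Suc)
    finally show ?thesis by (simp add: algebra_simps)
  qed
  then show ?case using p by blast
qed

lemma Y_dp:
  assumes c: "c \<in> P p"
  shows "Y (divided_power sc (T1 prd one) i c) m v = scM (vM.cc m i) (Y c (m - int i) v)"
proof -
  have "Y (divided_power sc (T1 prd one) i c) m v = scM (inverse (fact i) * ((-1)^i * (\<Prod>t<i. (of_int m - of_nat t)))) (Y c (m - int i) v)"
    unfolding divided_power_def Yscale using Y_T1pow[OF c] by simp
  also have "inverse (fact i) * ((-1)^i * (\<Prod>t<i. (of_int m - of_nat t))) = vM.cc m i"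
    unfolding vM.cc_def gbinomial_prod_rev by (simp add: atLeast0LessThan field_simps)
  finally show ?thesis .
qed

lemma dp_zero: "divided_power sc (T1 prd one) i 0 = 0"
proof -
  have "(T1 prd one ^^ i) 0 = 0" by (induction i) (simp_all add: T1_def prd_0L)
  then show ?thesis by (simp add: divided_power_def)
qed

definition XA :: "'v \<Rightarrow> 'v \<Rightarrow> 'm \<Rightarrow> int \<Rightarrow> int \<Rightarrow> 'm" where
  "XA a b v p q = Y a p (Y b q v)"
definition WA :: "'v \<Rightarrow> 'v \<Rightarrow> 'k \<Rightarrow> 'm \<Rightarrow> int \<Rightarrow> int \<Rightarrow> 'm" where
  "WA a b z v p q = scM z (Y b q (Y a p v))"

lemma XA_Xs: "\<exists>Q. Xs Q (XA a b v)"
proof -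
  obtain Q where "\<forall>q\<ge>Q. Y b q v = 0" using Yvan by blast
  then show ?thesis by (intro exI[of _ Q]) (auto simp: Xs_def XA_def Ya0)
qed
lemma WA_Ws: "\<exists>P. Ws P (WA a b z v)"
proof -
  obtain P where "\<forall>p\<ge>P. Y a p v = 0" using Yvan by blast
  then show ?thesis by (intro exI[of _ P]) (auto simp: Ws_def WA_def Ya0)
qed

lemma Y_prd_PI:
  assumes a: "a \<in> P pa" and b: "b \<in> P pb"
  shows "Y (prd n a b) m v = vM.PI n (XA a b v) (WA a b (zeta pa pb) v) m"
proof -
  have s: "Sum_any (\<lambda>j::nat. scM (vM.cc n j) (scM (zeta pa pb) (Y b (m + n - int j) (Y a (int j) v))))
     = scM (zeta pa pb) (Sum_any (\<lambda>j::nat. scM (vM.cc n j) (Y b (m + n - int j) (Y a (int j) v))))"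
    unfolding vM.SA_scale[symmetric] by (simp add: mult.commute)
  show ?thesis
    unfolding Yprd[OF a b] fprod_def vM.PI_def XA_def WA_def s
    by (simp add: vM.cc_def mult.commute)
qed


lemma cc_nat: "vM.cc (int N) j = (-1)^j * of_nat (N choose j)"
  by (simp add: vM.cc_def vM.gb_nat)

lemma part1:
  assumes a: "a \<in> P pa" and b: "b \<in> P pb" and sk: "skew_symmetric sc prd (T1 prd one) pa pb a b"
  shows "mutually_local scM pa pb (Y a) (Y b)"
proof -
  obtain N0 where N0: "\<forall>n\<ge>N0. prd n a b = 0" using sk by (auto simp: skew_symmetric_def)
  define N where "N = nat N0"
  define z where "z = (zeta pa pb :: 'k)"
  have zz: "z * z = 1" unfolding z_def by (rule zeta_sq)
  have ab: "prd k a b \<in> P (pa \<noteq> pb)" for k using par[OF a b] .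
  have skv: "vM.skw (XA a b v) (WA a b z v)" for v
    unfolding vM.skw_def vM.skewAt_def
  proof (intro allI)
    fix n m
    have t1: "tr (WA a b z v) = (\<lambda>p q. scM z (XA b a v p q))" by (simp add: fun_eq_iff tr_def WA_def XA_def)
    have t2: "tr (XA a b v) = (\<lambda>p q. scM z (WA b a (zeta pb pa) v p q))"
      by (simp add: fun_eq_iff tr_def WA_def XA_def zeta_sym[of pb pa] z_def[symmetric] zz)
    have L: "vM.PI n (tr (WA a b z v)) (tr (XA a b v)) m = Y (sc z (prd n b a)) m v"
      unfolding t1 t2 vM.PI_scale Yscale Y_prd_PI[OF b a] ..
    have fin: "finite {i. sc ((-1) powi (n + 1 + int i)) (divided_power sc (T1 prd one) i (prd (n + int i) a b)) \<noteq> 0}"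
    proof (rule finite_subset[of _ "{..<nat (N0 - n)}"])
      show "{i. sc ((-1) powi (n + 1 + int i)) (divided_power sc (T1 prd one) i (prd (n + int i) a b)) \<noteq> 0} \<subseteq> {..<nat (N0 - n)}"
      proof
        fix i assume "i \<in> {i. sc ((-1) powi (n + 1 + int i)) (divided_power sc (T1 prd one) i (prd (n + int i) a b)) \<noteq> 0}"
        then have "prd (n + int i) a b \<noteq> 0" by (auto simp: dp_zero)
        then have "\<not> n + int i \<ge> N0" using N0 by auto
        then show "i \<in> {..<nat (N0 - n)}" by auto
      qed
    qed simp
    have "Y (sc z (prd n b a)) m v = Y (Sum_any (\<lambda>i::nat. sc ((-1) powi (n + 1 + int i)) (divided_power sc (T1 prd one) i (prd (n + int i) a b)))) m v"
      using sk unfolding skew_symmetric_def z_def by simp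
    also have "\<dots> = Sum_any (\<lambda>i::nat. Y (sc ((-1) powi (n + 1 + int i)) (divided_power sc (T1 prd one) i (prd (n + int i) a b))) m v)"
      by (rule YSA[OF fin])
    also have "\<dots> = Sum_any (\<lambda>i::nat. scM ((-1) powi (n + 1 + int i)) (scM (vM.cc m i) (vM.PI (n + int i) (XA a b v) (WA a b z v) (m - int i))))"
      by (rule Sum_any.cong) (simp add: Yscale Y_dp[OF ab] Y_prd_PI[OF a b] z_def)
    finally show "vM.PI n (tr (WA a b z v)) (tr (XA a b v)) m = Sum_any (\<lambda>i::nat. scM ((-1) powi (n + 1 + int i)) (scM (vM.cc m i) (vM.PI (n + int i) (XA a b v) (WA a b z v) (m - int i))))"
      unfolding L .
  qed
  show ?thesis unfolding mutually_local_def
  proof (intro exI[of _ N] allI)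
    fix p q v
    obtain Q where XQ: "Xs Q (XA a b v)" using XA_Xs by blast
    obtain P' where WP: "Ws P' (WA a b z v)" using WA_Ws by blast
    have "(M1 ^^ N) (XA a b v) = (M1 ^^ N) (WA a b z v)"
    proof (rule vM.L1_N[OF XQ WP _ skv])
      fix n m :: int assume "n \<ge> int N"
      then have "n \<ge> N0" unfolding N_def by (simp split: if_splits)
      then show "vM.PI n (XA a b v) (WA a b z v) m = 0"
        using N0 Y_prd_PI[OF a b, of n m v] by (simp add: Y0 z_def)
    qed
    then have "(M1 ^^ N) (XA a b v) p q - (M1 ^^ N) (WA a b z v) p q = 0" by simp
    then show "(\<Sum>j\<le>N. scM ((-1) ^ j * of_nat (N choose j))
        (Y a (p + int N - int j) (Y b (q + int j) v) - scM (zeta pa pb) (Y b (q + int j) (Y a (p + int N - int j) v)))) = 0"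
      unfolding vM.M1p_sum sum_subtractf[symmetric] cc_nat
      by (simp add: lessThan_Suc_atMost XA_def WA_def z_def vM.scale_right_diff_distrib)
  qed
qed


lemma gb_absorb: "(of_int k - of_nat j) * ((of_int k::'k) gchoose j) = of_nat (Suc j) * (of_int k gchoose Suc j)"
  using gbinomial_mult_1[of "of_int k :: 'k" j] by (simp add: algebra_simps)

lemma cc_absorb: "vV.cc k j * (of_nat j - of_int k) = of_nat (Suc j) * vV.cc k (Suc j)"
proof -
  have "vV.cc k j * (of_nat j - of_int k) = - ((-1)^j * ((of_int k - of_nat j) * ((of_int k::'k) gchoose j)))"
    unfolding vV.cc_def by (simp add: algebra_simps)
  also have "\<dots> = of_nat (Suc j) * vV.cc k (Suc j)"
    unfolding gb_absorb vV.cc_def by (simp add: algebra_simps)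
  finally show ?thesis .
qed

lemma cc_m1: "vV.cc (-1) i = 1"
proof -
  have "((-1::'k) gchoose i) = (-1)^i * ((of_nat i) gchoose i)"
    by (subst gbinomial_negated_upper) simp
  also have "((of_nat i :: 'k) gchoose i) = 1" using binomial_gbinomial[of i i, where 'a='k] by simp
  finally show ?thesis by (simp add: vV.cc_def)
qed

context
  fixes T :: "'v \<Rightarrow> 'v" and a b :: 'v
  assumes VA: "vertex_algebra sc P prd one T"
begin

lemma linT: "Vector_Spaces.linear sc sc T" using VA by (simp add: vertex_algebra_def)
lemma transl: "T (prd n x y) - prd n x (T y) = sc (- of_int n) (prd (n - 1) x y)" using VA by (simp add: vertex_algebra_def)
lemma Tone: "T one = 0" using VA by (simp add: vertex_algebra_def)

lemma T_eq: "T1 prd one = T"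
proof
  fix x
  have "T (prd (-1) x one) - prd (-1) x (T one) = sc (- of_int (-1)) (prd (-1 - 1) x one)" by (rule transl)
  then show "T1 prd one x = T x" by (simp add: unit3 Tone prd_0R T1_def)
qed

definition cb :: "nat \<Rightarrow> 'v" where "cb r = prd (-1 - int r) b one"

lemma Tcb: "T (cb r) = sc (of_nat (Suc r)) (cb (Suc r))"
proof -
  have "T (prd (-1 - int r) b one) - prd (-1 - int r) b (T one) = sc (- of_int (-1 - int r)) (prd (-1 - int r - 1) b one)"
    by (rule transl)
  then show ?thesis by (simp add: cb_def Tone prd_0R algebra_simps)
qed

definition EE :: "nat \<Rightarrow> int \<Rightarrow> 'v" where
  "EE i k = (\<Sum>j<Suc i. sc (vV.cc k j) (prd (k - int j) a (cb (i - j))))"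

lemma TE: "T (EE i k) = sc (of_nat (Suc i)) (EE (Suc i) k)"
proof -
  define F where "F = (\<lambda>j. prd (k - int j) a (cb (Suc i - j)))"
  have tt: "T (prd (k - int j) a (cb (i - j))) = sc (of_nat (Suc i) - of_nat j) (F j) + sc (of_nat j - of_int k) (F (Suc j))"
    if j: "j < Suc i" for j
  proof -
    have "T (prd (k - int j) a (cb (i - j))) = prd (k - int j) a (T (cb (i - j))) + sc (- of_int (k - int j)) (prd (k - int j - 1) a (cb (i - j)))"
      using transl[of "k - int j" a "cb (i - j)"] by (simp add: algebra_simps)
    also have "prd (k - int j) a (T (cb (i - j))) = sc (of_nat (Suc i) - of_nat j) (F j)"
      unfolding Tcb linD(2)[OF linL] F_def using j by (simp add: Suc_diff_le of_nat_diff)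
    also have "prd (k - int j - 1) a (cb (i - j)) = F (Suc j)" unfolding F_def by (simp add: algebra_simps)
    finally show ?thesis by (simp add: algebra_simps)
  qed
  have "T (EE i k) = (\<Sum>j<Suc i. sc (vV.cc k j) (T (prd (k - int j) a (cb (i - j)))))"
    unfolding EE_def linD(5)[OF linT] linD(2)[OF linT] ..
  also have "\<dots> = (\<Sum>j<Suc i. sc (vV.cc k j * (of_nat (Suc i) - of_nat j)) (F j))
      + (\<Sum>j<Suc i. sc (of_nat (Suc j) * vV.cc k (Suc j)) (F (Suc j)))"
    by (simp add: tt sum.distrib vV.scale_right_distrib cc_absorb mult.assoc)
  also have "(\<Sum>j<Suc i. sc (vV.cc k j * (of_nat (Suc i) - of_nat j)) (F j))
      = (\<Sum>j<Suc (Suc i). sc (vV.cc k j * (of_nat (Suc i) - of_nat j)) (F j))"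
    by simp
  also have "(\<Sum>j<Suc i. sc (of_nat (Suc j) * vV.cc k (Suc j)) (F (Suc j)))
      = (\<Sum>j<Suc (Suc i). sc (of_nat j * vV.cc k j) (F j))"
    by (subst sum.lessThan_Suc_shift[of _ "Suc i"]) simp
  also have "(\<Sum>j<Suc (Suc i). sc (vV.cc k j * (of_nat (Suc i) - of_nat j)) (F j)) + (\<Sum>j<Suc (Suc i). sc (of_nat j * vV.cc k j) (F j))
      = (\<Sum>j<Suc (Suc i). sc (of_nat (Suc i)) (sc (vV.cc k j) (F j)))"
    by (simp only: sum.distrib[symmetric] vV.scale_left_distrib[symmetric]) (simp add: algebra_simps)
  also have "\<dots> = sc (of_nat (Suc i)) (EE (Suc i) k)"
    unfolding EE_def F_def vV.scale_sum_right ..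
  finally show ?thesis .
qed

lemma Tpow: "(T ^^ i) (prd k a b) = sc (fact i) (EE i k)"
proof (induction i)
  case 0 then show ?case by (simp add: EE_def cb_def unit3 vV.cc_def)
next
  case (Suc i)
  show ?case using Suc by (simp add: linD(2)[OF linT] TE mult.commute)
qed

lemma dp_EE: "divided_power sc (T1 prd one) i (prd k a b) = EE i k"
  unfolding divided_power_def T_eq Tpow by simp


lemma hol_prd: "hol_field sc (\<lambda>n. prd n x)" using VA by (simp add: vertex_algebra_def)
lemma loc: "x \<in> P p \<Longrightarrow> y \<in> P q \<Longrightarrow> mutually_local sc p q (\<lambda>n. prd n x) (\<lambda>n. prd n y)"
  using VA by (simp add: vertex_algebra_def)

lemma skewVA:
  assumes a: "a \<in> P pa" and b: "b \<in> P pb"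
  shows "skew_symmetric sc prd (T1 prd one) pa pb a b"
proof -
  define z where "z = (zeta pa pb :: 'k)"
  define XV where "XV = (\<lambda>p q. prd p a (prd q b one))"
  define WV where "WV = (\<lambda>p q. sc z (prd q b (prd p a one)))"
  have XQ: "Xs 0 XV" by (simp add: Xs_def XV_def unit2 prd_0R)
  have WP: "Ws 0 WV" by (simp add: Ws_def WV_def unit2 prd_0R)
  obtain N where N: "\<forall>p q v. (\<Sum>j\<le>N. sc ((-1)^j * of_nat (N choose j)) (prd (p + int N - int j) a (prd (q + int j) b v) - sc (zeta pa pb) (prd (q + int j) b (prd (p + int N - int j) a v)))) = 0"
    using loc[OF a b] unfolding mutually_local_def by blast
  have MM: "(M1 ^^ N) XV = (M1 ^^ N) WV"
  proof (intro ext)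
    fix p q
    have "(M1 ^^ N) XV p q - (M1 ^^ N) WV p q = 0"
      unfolding vV.M1p_sum sum_subtractf[symmetric] cc_nat
      using N[rule_format, of p q one] by (simp add: lessThan_Suc_atMost XV_def WV_def z_def vV.scale_right_diff_distrib)
    then show "(M1 ^^ N) XV p q = (M1 ^^ N) WV p q" by simp
  qed
  have sk: "vV.skw XV WV" by (rule vV.L2_N[OF XQ WP MM])
  have hN: "\<exists>N. \<forall>n\<ge>N. prd n a b = 0" using hol_prd[of a] by (auto simp: hol_field_def)
  have main: "sc z (prd n b a) = Sum_any (\<lambda>i::nat. sc ((-1) powi (n + 1 + int i)) (divided_power sc (T1 prd one) i (prd (n + int i) a b)))" for n
  proof -
    have L: "vV.PI n (tr WV) (tr XV) (-1) = sc z (prd n b a)"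
    proof -
      have 2: "Sum_any (\<lambda>j::nat. sc (vV.cc n j) (tr XV (int j) (-1 + n - int j))) = 0"
        by (simp add: tr_def XV_def unit2 prd_0R)
      have 1: "Sum_any (\<lambda>j::nat. sc (vV.cc n j) (tr WV (n - int j) (-1 + int j))) = sc z (prd n b a)"
      proof (subst SA_single[where jz=0])
        fix j :: nat assume "j \<noteq> 0"
        then have "-1 + int j \<ge> 0" by simp
        then show "sc (vV.cc n j) (tr WV (n - int j) (-1 + int j)) = 0" by (simp add: tr_def WV_def unit2 prd_0R)
      qed (simp add: tr_def WV_def unit3)
      show ?thesis unfolding vV.PI_def 1 2 by simp
    qed
    have R: "vV.PI (n + int i) XV WV (-1 - int i) = divided_power sc (T1 prd one) i (prd (n + int i) a b)" for i
    proof -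
      have 2: "Sum_any (\<lambda>j::nat. sc (vV.cc (n + int i) j) (WV (int j) (-1 - int i + (n + int i) - int j))) = 0"
        by (simp add: WV_def unit2 prd_0R)
      have 1: "Sum_any (\<lambda>j::nat. sc (vV.cc (n + int i) j) (XV (n + int i - int j) (-1 - int i + int j))) = EE i (n + int i)"
      proof -
        have "Sum_any (\<lambda>j::nat. sc (vV.cc (n + int i) j) (XV (n + int i - int j) (-1 - int i + int j)))
          = (\<Sum>j<Suc i. sc (vV.cc (n + int i) j) (XV (n + int i - int j) (-1 - int i + int j)))"
        proof (rule SA_nat)
          fix j assume "j \<ge> Suc i"
          then have "-1 - int i + int j \<ge> 0" by simp
          then show "sc (vV.cc (n + int i) j) (XV (n + int i - int j) (-1 - int i + int j)) = 0"
            by (simp add: XV_def unit2 prd_0R)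
        qed
        also have "\<dots> = EE i (n + int i)"
          unfolding EE_def
        proof (rule sum.cong)
          fix j assume "j \<in> {..<Suc i}"
          then have e: "-1 - int i + int j = -1 - int (i - j)" by simp
          show "sc (vV.cc (n + int i) j) (XV (n + int i - int j) (-1 - int i + int j)) = sc (vV.cc (n + int i) j) (prd (n + int i - int j) a (cb (i - j)))"
            unfolding XV_def cb_def e ..
        qed simp
        finally show ?thesis .
      qed
      show ?thesis unfolding vV.PI_def 1 2 dp_EE by simp
    qed
    have "vV.PI n (tr WV) (tr XV) (-1) = Sum_any (\<lambda>i::nat. sc ((-1) powi (n + 1 + int i)) (sc (vV.cc (-1) i) (vV.PI (n + int i) XV WV (-1 - int i))))"
      using sk unfolding vV.skw_def vV.skewAt_def by simp
    then show ?thesis unfolding L R cc_m1 by simp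
  qed
  show ?thesis unfolding skew_symmetric_def using hN main unfolding z_def by blast
qed

end


theorem final:
  shows "(\<forall>pa pb a b. a \<in> P pa \<longrightarrow> b \<in> P pb \<longrightarrow> skew_symmetric sc prd (T1 prd one) pa pb a b
            \<longrightarrow> mutually_local scM pa pb (Y a) (Y b))
       \<and> (\<forall>T. vertex_algebra sc P prd one T \<longrightarrow>
            (\<forall>pa pb a b. a \<in> P pa \<longrightarrow> b \<in> P pb \<longrightarrow> mutually_local scM pa pb (Y a) (Y b)))"
  using part1 skewVA by blast

end

theorem mainTheorem19:
  fixes sc :: "'k::field_char_0 \<Rightarrow> 'v::ab_group_add \<Rightarrow> 'v"
    and P :: "bool \<Rightarrow> 'v set"
    and prd :: "int \<Rightarrow> 'v \<Rightarrow> 'v \<Rightarrow> 'v"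
    and one :: 'v
    and scM :: "'k \<Rightarrow> 'm::ab_group_add \<Rightarrow> 'm"
    and PM :: "bool \<Rightarrow> 'm set"
    and Y :: "'v \<Rightarrow> 'm zfield"
  assumes V: "unital_zfold_algebra sc P prd one"
    and M: "zfold_module sc P prd one scM PM Y"
  shows "(\<forall>pa pb a b. a \<in> P pa \<longrightarrow> b \<in> P pb \<longrightarrow> skew_symmetric sc prd (T1 prd one) pa pb a b
            \<longrightarrow> mutually_local scM pa pb (Y a) (Y b))
       \<and> (\<forall>T. vertex_algebra sc P prd one T \<longrightarrow>
            (\<forall>pa pb a b. a \<in> P pa \<longrightarrow> b \<in> P pb \<longrightarrow> mutually_local scM pa pb (Y a) (Y b)))"
proof -
  interpret modsetup sc P prd one scM PM Y by (rule modsetup.intro[OF V M])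
  show ?thesis by (rule final)
qed

end
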